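(* Let $n\ge1$, $\lambda,R>0$ and $\alpha>1$. Let $\phi:[0,R]\to\mathbb{R}$ be a nonnegative solution of $$r^{1-n}(r^{n-1}\phi')'=\lambda\phi^\alpha\ \text{ in }(0,R),\qquad \phi(0)=1,\qquad\phi'(0)=0.$$ Then $\phi'>0$ in $(0,R)$ and, for every $k=1,2,\dots$, there exists $c_{n,k}>0$ depending only on $n$ and $k$ such that $\phi(r)\ge c_{n,k}\lambda^kr^{2k}$ for every $r\in(0,R)$. *)

theory Defs
  imports "HOL-Analysis.Analysis"
begin

text \<open>Classical solution phi in C^1[0,R] (derivative dphi, one-sided at the endpoints),
  with r^(n-1) phi' differentiable in (0,R) and
  (r^(n-1) phi')' = lam r^(n-1) phi^alpha there, i.e. r^(1-n)(r^(n-1) phi')' = lam phi^alpha;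
  phi nonnegative on [0,R], phi(0) = 1, phi'(0) = 0.\<close>
definition radial_solution ::
  "nat \<Rightarrow> real \<Rightarrow> real \<Rightarrow> real \<Rightarrow> (real \<Rightarrow> real) \<Rightarrow> (real \<Rightarrow> real) \<Rightarrow> bool" where
  "radial_solution n lam alpha R phi dphi \<longleftrightarrow>
     (\<forall>r\<in>{0..R}. (phi has_real_derivative dphi r) (at r within {0..R})) \<and>
     continuous_on {0..R} dphi \<and>
     (\<forall>r\<in>{0<..<R}. ((\<lambda>s. s ^ (n - 1) * dphi s) has_real_derivative
                        (lam * r ^ (n - 1) * phi r powr alpha)) (at r)) \<and>
     (\<forall>r\<in>{0..R}. phi r \<ge> 0) \<and>
     phi 0 = 1 \<and> dphi 0 = 0"

end

theory Submission
  imports Defs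
begin

lemma mono_helper:
  fixes f f' :: "real \<Rightarrow> real"
  assumes "a \<le> b" "continuous_on {a..b} f"
    "\<And>x. a < x \<Longrightarrow> x < b \<Longrightarrow> (f has_real_derivative f' x) (at x)"
    "\<And>x. a < x \<Longrightarrow> x < b \<Longrightarrow> f' x \<ge> 0"
  shows "f a \<le> f b"
proof (cases "a = b")
  case True then show ?thesis by simp
next
  case False
  then have ab: "a < b" using assms(1) by simp
  obtain l z where lz: "a < z" "z < b" "DERIV f z :> l" "f b - f a = (b - a) * l"
    using MVT[OF ab assms(2)] assms(3) real_differentiable_def by blast
  then have "l = f' z" using assms(3) DERIV_unique by blast
  then have "l \<ge> 0" using assms(4) lz by simp
  then show ?thesis using lz ab by (smt (verit) mult_nonneg_nonneg)
qed

fun cc :: "nat \<Rightarrow> nat \<Rightarrow> real" where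
  "cc n 0 = 1"
| "cc n (Suc k) = cc n k / real ((n + 2 * k) * (2 * k + 2))"

lemma cc_pos: "n \<ge> 1 \<Longrightarrow> cc n k > 0"
proof (induction k)
  case 0 then show ?case by simp
next
  case (Suc k)
  have "(n + 2 * k) * (2 * k + 2) > 0" using Suc.prems by simp
  then have "real ((n + 2 * k) * (2 * k + 2)) > 0" by (simp only: of_nat_0_less_iff)
  then show ?case unfolding cc.simps using Suc by (intro divide_pos_pos) auto
qed

locale rsol =
  fixes n :: nat and lam alpha R :: real and phi dphi :: "real \<Rightarrow> real"
  assumes n1: "n \<ge> 1" and lam: "lam > 0" and alpha: "alpha > 1"
    and rs: "radial_solution n lam alpha R phi dphi"
begin

lemma dphi_der: "\<And>r. r \<in> {0..R} \<Longrightarrow> (phi has_real_derivative dphi r) (at r within {0..R})"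
  and dphi_cont: "continuous_on {0..R} dphi"
  and psi_der: "\<And>r. r \<in> {0<..<R} \<Longrightarrow> ((\<lambda>s. s ^ (n - 1) * dphi s) has_real_derivative
                        (lam * r ^ (n - 1) * phi r powr alpha)) (at r)"
  and phi_nn: "\<And>r. r \<in> {0..R} \<Longrightarrow> phi r \<ge> 0"
  and phi0: "phi 0 = 1" and dphi0: "dphi 0 = 0"
  using rs unfolding radial_solution_def by auto

lemma phi_cont: "continuous_on {0..R} phi"
  using dphi_der DERIV_continuous continuous_on_eq_continuous_within by blast

lemma psi_cont: "continuous_on {0..R} (\<lambda>s. s ^ (n - 1) * dphi s)"
  by (intro continuous_on_mult continuous_on_power continuous_on_id dphi_cont)

lemma phi_der_at: "0 < r \<Longrightarrow> r < R \<Longrightarrow> (phi has_real_derivative dphi r) (at r)"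
  using dphi_der[of r] at_within_Icc_at[of 0 r R] by simp

lemma psi0: "0 ^ (n - 1) * dphi 0 = (0::real)"
  using dphi0 by simp

lemma psi_nonneg: assumes "0 \<le> r" "r \<le> R" shows "r ^ (n - 1) * dphi r \<ge> 0"
proof -
  have "(\<lambda>s. s ^ (n - 1) * dphi s) 0 \<le> (\<lambda>s. s ^ (n - 1) * dphi s) r"
  proof (rule mono_helper[where f = "\<lambda>s. s ^ (n - 1) * dphi s" and f' = "\<lambda>r. lam * r ^ (n - 1) * phi r powr alpha"])
    show "continuous_on {0..r} (\<lambda>s. s ^ (n - 1) * dphi s)"
      by (rule continuous_on_subset[OF psi_cont]) (use assms in auto)
    show "((\<lambda>s. s ^ (n - 1) * dphi s) has_real_derivative lam * x ^ (n - 1) * phi x powr alpha) (at x)"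
      if "0 < x" "x < r" for x :: real using psi_der that assms by simp
    show "0 \<le> lam * x ^ (n - 1) * phi x powr alpha" if "0 < x" "x < r" for x :: real
      using lam that by simp
  qed (use assms in auto)
  then show ?thesis using psi0 by linarith
qed

lemma dphi_nonneg: assumes "0 < r" "r \<le> R" shows "dphi r \<ge> 0"
proof -
  have "r ^ (n - 1) > 0" using assms by simp
  then show ?thesis using psi_nonneg[of r] assms by (simp add: zero_le_mult_iff not_le[symmetric])
qed

lemma phi_ge1: assumes "0 \<le> r" "r \<le> R" shows "phi r \<ge> 1"
proof -
  have "phi 0 \<le> phi r"
  proof (rule mono_helper[where f = phi and f' = dphi])
    show "continuous_on {0..r} phi"
      by (rule continuous_on_subset[OF phi_cont]) (use assms in auto)
  qed (use assms phi_der_at dphi_nonneg in auto)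
  then show ?thesis using phi0 by simp
qed

lemma phi_powr: assumes "0 \<le> r" "r \<le> R" shows "phi r powr alpha \<ge> phi r"
proof -
  have "phi r powr 1 \<le> phi r powr alpha"
    using powr_mono[of 1 alpha "phi r"] alpha phi_ge1[OF assms] by simp
  then show ?thesis using phi_ge1[OF assms] by simp
qed

lemma step_d:
  fixes c :: real and k :: nat
  assumes c: "c \<ge> 0" and hyp: "\<And>s. 0 \<le> s \<Longrightarrow> s < R \<Longrightarrow> phi s \<ge> c * lam ^ k * s ^ (2 * k)"
    and r: "0 < r" "r < R"
  shows "dphi r \<ge> c * lam ^ (k + 1) * r ^ (2 * k + 1) / (n + 2 * k)"
proof -
  define m where "m = n + 2 * k"
  have m1: "m \<ge> 1" using n1 m_def by simp
  have z: "(0::real) ^ m = 0" using m1 by simp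
  define g where "g = (\<lambda>s. s ^ (n - 1) * dphi s - c * lam ^ (k + 1) * s ^ m / m)"
  have "g 0 \<le> g r"
  proof (rule mono_helper[where f = g and f' = "\<lambda>s. lam * s ^ (n - 1) * phi s powr alpha - c * lam ^ (k + 1) * (m * s ^ (m - 1)) / m"])
    show "continuous_on {0..r} g" unfolding g_def
      apply (rule continuous_on_diff)
       apply (rule continuous_on_subset[OF psi_cont])
      using r m1 by (auto intro!: continuous_intros)
    show "(g has_real_derivative lam * x ^ (n - 1) * phi x powr alpha - c * lam ^ (k + 1) * (m * x ^ (m - 1)) / m) (at x)"
      if "0 < x" "x < r" for x :: real unfolding g_def
      apply (rule DERIV_diff[OF psi_der])
      using that r m1 by (auto intro!: derivative_eq_intros)
    show "0 \<le> lam * x ^ (n - 1) * phi x powr alpha - c * lam ^ (k + 1) * (m * x ^ (m - 1)) / m"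
      if x: "0 < x" "x < r" for x :: real
    proof -
      have "m - 1 = (n - 1) + 2 * k" using m_def n1 by simp
      then have e: "c * lam ^ (k + 1) * (m * x ^ (m - 1)) / m = lam * x ^ (n - 1) * (c * lam ^ k * x ^ (2 * k))"
        using m1 by (simp add: power_add)
      have "c * lam ^ k * x ^ (2 * k) \<le> phi x" using hyp[of x] x r by simp
      also have "\<dots> \<le> phi x powr alpha" using phi_powr[of x] x r by simp
      finally have "lam * x ^ (n - 1) * (c * lam ^ k * x ^ (2 * k)) \<le> lam * x ^ (n - 1) * phi x powr alpha"
        using lam x by (intro mult_left_mono) auto
      then show ?thesis using e by simp
    qed
  qed (use r in auto)
  moreover have "g 0 = 0" unfolding g_def by (simp only: psi0 z)
  ultimately have A: "r ^ (n - 1) * dphi r \<ge> c * lam ^ (k + 1) * r ^ m / m" unfolding g_def by simp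
  have me: "m = (n - 1) + (2 * k + 1)" using n1 m_def by simp
  have rm: "r ^ m = r ^ (n - 1) * r ^ (2 * k + 1)" unfolding me by (rule power_add)
  have rp: "r ^ (n - 1) > 0" using r by simp
  from A have "r ^ (n - 1) * (c * lam ^ (k + 1) * r ^ (2 * k + 1) / m) \<le> r ^ (n - 1) * dphi r"
    unfolding rm by (simp add: algebra_simps)
  then have B: "c * lam ^ (k + 1) * r ^ (2 * k + 1) / m \<le> dphi r"
    using rp by (rule mult_left_le_imp_le)
  then show "dphi r \<ge> c * lam ^ (k + 1) * r ^ (2 * k + 1) / (n + 2 * k)" using m_def by simp
qed

lemma step_p:
  fixes c :: real and k :: nat
  assumes c: "c \<ge> 0" and hyp: "\<And>s. 0 \<le> s \<Longrightarrow> s < R \<Longrightarrow> phi s \<ge> c * lam ^ k * s ^ (2 * k)"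
    and r: "0 < r" "r < R"
  shows "phi r \<ge> c * lam ^ (k + 1) * r ^ (2 * k + 2) / ((n + 2 * k) * (2 * k + 2))"
proof -
  define m where "m = n + 2 * k"
  have m1: "m \<ge> 1" using n1 m_def by simp
  have mk: "(0::real) < 2 * real m + real m * (2 * real k)" using m1 by (intro add_pos_nonneg) auto
  define h where "h = (\<lambda>s. phi s - c * lam ^ (k + 1) * s ^ (2 * k + 2) / (m * (2 * k + 2)))"
  have "h 0 \<le> h r"
  proof (rule mono_helper[where f = h and f' = "\<lambda>s. dphi s - c * lam ^ (k + 1) * ((2 * k + 2) * s ^ (2 * k + 1)) / (m * (2 * k + 2))"])
    show "continuous_on {0..r} h" unfolding h_def
      using r m1 mk by (intro continuous_intros) (auto intro: continuous_on_subset[OF phi_cont])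
    show "(h has_real_derivative dphi x - c * lam ^ (k + 1) * ((2 * k + 2) * x ^ (2 * k + 1)) / (m * (2 * k + 2))) (at x)"
      if "0 < x" "x < r" for x :: real unfolding h_def
      using that r m1 mk by (intro derivative_eq_intros phi_der_at) (auto intro!: phi_der_at)
    show "0 \<le> dphi x - c * lam ^ (k + 1) * ((2 * k + 2) * x ^ (2 * k + 1)) / (m * (2 * k + 2))"
      if x: "0 < x" "x < r" for x :: real
    proof -
      have "c * lam ^ (k + 1) * ((2 * k + 2) * x ^ (2 * k + 1)) / (m * (2 * k + 2)) = c * lam ^ (k + 1) * x ^ (2 * k + 1) / m"
      proof -
        have gen: "\<And>a b y mm::real. b \<noteq> 0 \<Longrightarrow> a * (b * y) / (mm * b) = a * y / mm" by simp
        show ?thesis unfolding of_nat_mult by (rule gen) simp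
      qed
      moreover have "c * lam ^ (k + 1) * x ^ (2 * k + 1) / m \<le> dphi x"
        using step_d[OF c hyp, of x] x r m_def by simp
      ultimately show ?thesis by simp
    qed
  qed (use r in auto)
  moreover have "h 0 = 1" unfolding h_def using phi0 by simp
  ultimately show "phi r \<ge> c * lam ^ (k + 1) * r ^ (2 * k + 2) / ((n + 2 * k) * (2 * k + 2))"
    unfolding h_def m_def by simp
qed

lemma lower: "0 \<le> r \<Longrightarrow> r < R \<Longrightarrow> phi r \<ge> cc n k * lam ^ k * r ^ (2 * k)"
proof (induction k arbitrary: r)
  case 0
  then show ?case using phi_ge1[of r] by simp
next
  case (Suc k)
  show ?case
  proof (cases "r = 0")
    case True
    then show ?thesis using phi0 by simp
  next
    case False
    then have r: "0 < r" "r < R" using Suc.prems by auto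
    have "cc n k * lam ^ (k + 1) * r ^ (2 * k + 2) / ((n + 2 * k) * (2 * k + 2)) \<le> phi r"
      using step_p[of "cc n k" k r] cc_pos[OF n1, of k] Suc.IH r by auto
    moreover have "cc n (Suc k) * lam ^ Suc k * r ^ (2 * Suc k) =
       cc n k * lam ^ (k + 1) * r ^ (2 * k + 2) / ((n + 2 * k) * (2 * k + 2))" by simp
    ultimately show ?thesis by simp
  qed
qed

lemma dphi_pos: assumes "0 < r" "r < R" shows "dphi r > 0"
proof -
  have "dphi r \<ge> 1 * lam ^ (0 + 1) * r ^ (2 * 0 + 1) / (n + 2 * 0)"
    using step_d[of 1 0 r] phi_ge1 assms by auto
  moreover have "1 * lam ^ (0 + 1) * r ^ (2 * 0 + 1) / (n + 2 * 0) > 0"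
    using lam assms n1 by simp
  ultimately show ?thesis by linarith
qed

end

theorem lemma4p6:
  fixes n :: nat
  assumes "n \<ge> 1"
  shows "(\<forall>lam R alpha phi dphi.
            lam > 0 \<and> R > 0 \<and> alpha > 1 \<and> radial_solution n lam alpha R phi dphi
            \<longrightarrow> (\<forall>r\<in>{0<..<R}. dphi r > 0))
       \<and> (\<forall>k::nat. k \<ge> 1 \<longrightarrow> (\<exists>c>0. \<forall>lam R alpha phi dphi.
            lam > 0 \<and> R > 0 \<and> alpha > 1 \<and> radial_solution n lam alpha R phi dphi
            \<longrightarrow> (\<forall>r\<in>{0<..<R}. phi r \<ge> c * lam ^ k * r ^ (2 * k))))"
proof (intro conjI allI impI)
  fix lam R alpha phi dphi
  assume h: "lam > 0 \<and> R > 0 \<and> alpha > 1 \<and> radial_solution n lam alpha R phi dphi"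
  interpret rsol n lam alpha R phi dphi using h assms by unfold_locales auto
  show "\<forall>r\<in>{0<..<R}. dphi r > 0" using dphi_pos by auto
next
  fix k :: nat
  assume "k \<ge> 1"
  show "\<exists>c>0. \<forall>lam R alpha phi dphi.
            lam > 0 \<and> R > 0 \<and> alpha > 1 \<and> radial_solution n lam alpha R phi dphi
            \<longrightarrow> (\<forall>r\<in>{0<..<R}. phi r \<ge> c * lam ^ k * r ^ (2 * k))"
  proof (intro exI conjI allI impI ballI)
    show "cc n k > 0" using cc_pos assms by simp
    fix lam R alpha phi dphi r
    assume h: "lam > 0 \<and> R > 0 \<and> alpha > 1 \<and> radial_solution n lam alpha R phi dphi"
      and r: "r \<in> {0<..<R}"
    interpret rsol n lam alpha R phi dphi using h assms by unfold_locales auto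
    show "phi r \<ge> cc n k * lam ^ k * r ^ (2 * k)" using lower r by auto
  qed
qed

end
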